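(* Let $m\ge1$, $d=2m$, and work in $\mathcal{H}^{\mathrm B}$. Then: (a) $u_j^+$ commutes with $T_i$ for all $i\in\{0,1,\dots,d-1\}\setminus\{j\}$. (b) For $i\ge1$, $u_i^+T_{i\to0}=u_{i+1}^+T_{1\to i}^{-1}-q^iu_i^+T_{1\to i}^{-1}$. (c) Let $x\in\Sigma_{2m}$ and $i\ge1$. Then $u_i^+T_xT_0\in u_i^+\mathcal{H}+\sum_{j>i}\mathcal{H}u_j^+\mathcal{H}$. In particular, $u_i^+T_{i\to0}\in u_i^+(-q^iT_{1\to i}^{-1})+\sum_{j>i}\mathcal{H}u_j^+\mathcal{H}$.
   Context: $K$ is a commutative ring and $q\in K^\times$. $\mathcal{H}^{\mathrm B}=\mathcal{H}_{(1,q)}(W(\mathrm B_{2m}))$ is the associative $K$-algebra generated by $T_0,T_1,\dots,T_{2m-1}$ subject to the type $\mathrm B_{2m}$ braid relations ($T_0T_1T_0T_1=T_1T_0T_1T_0$, $T_0T_i=T_iT_0$ for $i\ge2$, $T_iT_{i+1}T_i=T_{i+1}T_iT_{i+1}$ and $T_iT_j=T_jT_i$ for $i,j\ge1$, $|i-j|\ge2$) and quadratic relations $T_0^2=1$, $T_i^2=(q-1)T_i+q$ for $i\ge1$. $\mathcal{H}=\mathcal{H}_q(\Sigma_{2m})$ is the subalgebra generated by $T_1,\dots,T_{2m-1}$, and $T_x=T_{i_1}\cdots T_{i_r}$ for a reduced expression $x=s_{i_1}\cdots s_{i_r}$. For $a,b\ge0$: $T_{a\to b}=T_aT_{a-1}\cdots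 T_b$ if $a>b$, $T_a$ if $a=b$, $T_aT_{a+1}\cdots T_b$ if $a<b$; $T_{a\to b\to a}=T_aT_{a-1}\cdots T_{b+1}T_bT_{b+1}\cdots T_a$ if $a>b$, $T_a$ if $a=b$, and $T_a\cdots T_{b-1}T_bT_{b-1}\cdots T_a$ if $a<b$. The Jucys–Murphy type elements are $u_k^{\pm}=\prod_{i=0}^{k-1}(q^i\pm T_{i\to0\to i})$ (the factors commute pairwise), with $u_0^\pm=1$. *)

theory Defs
  imports Main
begin

(* A K-algebra A (ring 'a) with structure map sc : K \<Rightarrow> A (unital ring hom into the centre),
   containing elements T 0, ..., T (d-1) satisfying the defining relations of
   H_(1,q)(W(B_d)).  Identities and span-memberships holding in every such algebra are exactly
   those holding in the universal one H^B (which is itself such an algebra). *)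
definition is_HB :: "('k::comm_ring_1 \<Rightarrow> 'a::ring_1) \<Rightarrow> 'k \<Rightarrow> nat \<Rightarrow> (nat \<Rightarrow> 'a) \<Rightarrow> bool" where
  "is_HB sc q d T \<longleftrightarrow>
     sc 1 = 1 \<and> (\<forall>a b. sc (a + b) = sc a + sc b) \<and> (\<forall>a b. sc (a * b) = sc a * sc b)
   \<and> (\<forall>a x. sc a * x = x * sc a)
   \<and> q dvd 1
   \<and> (1 < d \<longrightarrow> T 0 * T 1 * T 0 * T 1 = T 1 * T 0 * T 1 * T 0)
   \<and> (\<forall>i. 2 \<le> i \<and> i < d \<longrightarrow> T 0 * T i = T i * T 0)
   \<and> (\<forall>i. 1 \<le> i \<and> i + 1 < d \<longrightarrow> T i * T (i+1) * T i = T (i+1) * T i * T (i+1))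
   \<and> (\<forall>i j. 1 \<le> i \<and> 1 \<le> j \<and> i < d \<and> j < d \<and> (i + 2 \<le> j \<or> j + 2 \<le> i) \<longrightarrow> T i * T j = T j * T i)
   \<and> T 0 * T 0 = 1
   \<and> (\<forall>i. 1 \<le> i \<and> i < d \<longrightarrow> T i * T i = (sc q - 1) * T i + sc q)"

definition Tarr :: "(nat \<Rightarrow> 'a::ring_1) \<Rightarrow> nat \<Rightarrow> nat \<Rightarrow> 'a" where
  "Tarr T a b = (if b \<le> a then prod_list (map T (rev [b..<Suc a])) else prod_list (map T [a..<Suc b]))"

definition Tarr2 :: "(nat \<Rightarrow> 'a::ring_1) \<Rightarrow> nat \<Rightarrow> nat \<Rightarrow> 'a" where
  "Tarr2 T a b = (if a = b then T a
                  else if b < a then Tarr T a (b+1) * T b * Tarr T (b+1) a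
                  else Tarr T a (b-1) * T b * Tarr T (b-1) a)"

definition uplus :: "('k \<Rightarrow> 'a::ring_1) \<Rightarrow> 'k \<Rightarrow> (nat \<Rightarrow> 'a) \<Rightarrow> nat \<Rightarrow> 'a" where
  "uplus sc q T k = prod_list (map (\<lambda>i. sc q ^ i + Tarr2 T i 0) [0..<k])"

definition rinv :: "'a::ring_1 \<Rightarrow> 'a" where
  "rinv x = (THE y. x * y = 1 \<and> y * x = 1)"

inductive_set Hset :: "('k \<Rightarrow> 'a::ring_1) \<Rightarrow> (nat \<Rightarrow> 'a) \<Rightarrow> nat \<Rightarrow> 'a set"
  for sc T d where
  scal: "sc a \<in> Hset sc T d"
| gen: "1 \<le> i \<Longrightarrow> i < d \<Longrightarrow> T i \<in> Hset sc T d"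
| add: "x \<in> Hset sc T d \<Longrightarrow> y \<in> Hset sc T d \<Longrightarrow> x + y \<in> Hset sc T d"
| mult: "x \<in> Hset sc T d \<Longrightarrow> y \<in> Hset sc T d \<Longrightarrow> x * y \<in> Hset sc T d"

inductive_set twosided :: "'a::ring_1 set \<Rightarrow> 'a \<Rightarrow> 'a set" for H u where
  zero: "0 \<in> twosided H u"
| prod: "h \<in> H \<Longrightarrow> h' \<in> H \<Longrightarrow> h * u * h' \<in> twosided H u"
| add: "x \<in> twosided H u \<Longrightarrow> y \<in> twosided H u \<Longrightarrow> x + y \<in> twosided H u"

definition perm_of_word :: "nat list \<Rightarrow> nat \<Rightarrow> nat" where
  "perm_of_word w = foldr (\<lambda>i p. (id(i := i + 1, i + 1 := i)) \<circ> p) w id"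

(* Coxeter length of a permutation of {1..d}: number of inversions *)
definition ninv :: "nat \<Rightarrow> (nat \<Rightarrow> nat) \<Rightarrow> nat" where
  "ninv d p = card {(a, b). 1 \<le> a \<and> a < b \<and> b \<le> d \<and> p b < p a}"

definition reduced_word :: "nat \<Rightarrow> nat list \<Rightarrow> bool" where
  "reduced_word d w \<longleftrightarrow> set w \<subseteq> {1..<d} \<and> length w = ninv d (perm_of_word w)"

definition Tword :: "(nat \<Rightarrow> 'a::ring_1) \<Rightarrow> nat list \<Rightarrow> 'a" where
  "Tword T w = prod_list (map T w)"

end

theory Submission imports Defs begin

definition Dn :: "(nat \<Rightarrow> 'a::ring_1) \<Rightarrow> nat \<Rightarrow> 'a" where
  "Dn T k = prod_list (map T (rev [1..<Suc k]))"
definition Up :: "(nat \<Rightarrow> 'a::ring_1) \<Rightarrow> nat \<Rightarrow> 'a" where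
  "Up T k = prod_list (map T [1..<Suc k])"
definition Lk :: "(nat \<Rightarrow> 'a::ring_1) \<Rightarrow> nat \<Rightarrow> 'a" where
  "Lk T k = Dn T k * T 0 * Up T k"
definition Fk :: "('k \<Rightarrow> 'a::ring_1) \<Rightarrow> 'k \<Rightarrow> (nat \<Rightarrow> 'a) \<Rightarrow> nat \<Rightarrow> 'a" where
  "Fk sc q T k = sc q ^ k + Lk T k"

lemma Dn_0[simp]: "Dn T 0 = 1" by (simp add: Dn_def)
lemma Dn_Suc[simp]: "Dn T (Suc k) = T (Suc k) * Dn T k" by (simp add: Dn_def)
lemma Up_0[simp]: "Up T 0 = 1" by (simp add: Up_def)
lemma Up_Suc[simp]: "Up T (Suc k) = Up T k * T (Suc k)" by (simp add: Up_def)
lemma Lk_0[simp]: "Lk T 0 = T 0" by (simp add: Lk_def)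
lemma Lk_Suc[simp]: "Lk T (Suc k) = T (Suc k) * Lk T k * T (Suc k)"
  by (simp add: Lk_def mult.assoc)

lemma Tarr_down1: "1 \<le> k \<Longrightarrow> Tarr T k 1 = Dn T k"
  by (simp add: Tarr_def Dn_def)
lemma Tarr_up1: "1 \<le> k \<Longrightarrow> Tarr T 1 k = Up T k"
  by (cases "k = 1") (auto simp add: Tarr_def Up_def)
lemma Tarr_i0: "Tarr T i 0 = Dn T i * T 0"
  by (simp add: Tarr_def Dn_def upt_conv_Cons del: upt_Suc)
lemma Tarr2_0: "Tarr2 T k 0 = Lk T k"
proof (cases "k = 0")
  case False
  then have "Tarr2 T k 0 = Tarr T k 1 * T 0 * Tarr T 1 k" by (simp add: Tarr2_def)
  then show ?thesis using False Tarr_down1[of k T] Tarr_up1[of k T] by (simp add: Lk_def)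
qed (simp add: Tarr2_def)

lemma uplus_0[simp]: "uplus sc q T 0 = 1" by (simp add: uplus_def)
lemma uplus_Suc[simp]: "uplus sc q T (Suc k) = uplus sc q T k * Fk sc q T k"
  unfolding uplus_def Fk_def Tarr2_0 by simp

lemma commI: "(a::'a::ring_1) * x = x * a \<Longrightarrow> a * y = y * a \<Longrightarrow> a * (x * y) = (x * y) * a"
  by (metis mult.assoc)


inductive_set Vset :: "('k \<Rightarrow> 'a::ring_1) \<Rightarrow> (nat \<Rightarrow> 'a) \<Rightarrow> nat \<Rightarrow> 'a set"
  for sc T d where
  zero: "0 \<in> Vset sc T d"
| base: "k < d \<Longrightarrow> x \<in> Hset sc (\<lambda>n. T (Suc n)) (d - 1) \<Longrightarrow> Dn T k * x \<in> Vset sc T d"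
| add: "x \<in> Vset sc T d \<Longrightarrow> y \<in> Vset sc T d \<Longrightarrow> x + y \<in> Vset sc T d"

lemma twosided_rmul: "x \<in> twosided H u \<Longrightarrow> (\<And>a b. a \<in> H \<Longrightarrow> b \<in> H \<Longrightarrow> a * b \<in> H) \<Longrightarrow> g \<in> H
  \<Longrightarrow> x * g \<in> twosided H u"
proof (induction rule: twosided.induct)
  case zero then show ?case by (simp add: twosided.zero)
next
  case (prod h h') then show ?case using twosided.prod[of h H "h' * g" u] by (simp add: mult.assoc)
next
  case (add x y) then show ?case using twosided.add[of "x * g" H u "y * g"] by (simp add: distrib_right)
qed

lemma rinv_eq: "(x::'a::ring_1) * y = 1 \<Longrightarrow> y * x = 1 \<Longrightarrow> rinv x = y"
  unfolding rinv_def
  by (rule the_equality) (simp, metis mult.assoc mult_1_left mult_1_right)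

locale hb =
  fixes sc :: "'k::comm_ring_1 \<Rightarrow> 'a::ring_1" and q :: 'k and d :: nat and T :: "nat \<Rightarrow> 'a"
  assumes HB: "is_HB sc q d T"
begin

lemma sc1: "sc 1 = 1" using HB unfolding is_HB_def by blast
lemma scadd: "sc (a + b) = sc a + sc b" using HB unfolding is_HB_def by blast
lemma scmul: "sc (a * b) = sc a * sc b" using HB unfolding is_HB_def by blast
lemma cen: "sc a * x = x * sc a" using HB unfolding is_HB_def by blast
lemma qunit: "q dvd 1" using HB unfolding is_HB_def by blast
lemma br01: "1 < d \<Longrightarrow> T 0 * T 1 * T 0 * T 1 = T 1 * T 0 * T 1 * T 0" using HB unfolding is_HB_def by blast
lemma c0i: "2 \<le> i \<Longrightarrow> i < d \<Longrightarrow> T 0 * T i = T i * T 0" using HB unfolding is_HB_def by blast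
lemma braid: "1 \<le> i \<Longrightarrow> i + 1 < d \<Longrightarrow> T i * T (i+1) * T i = T (i+1) * T i * T (i+1)"
  using HB unfolding is_HB_def by blast
lemma far: "1 \<le> i \<Longrightarrow> 1 \<le> j \<Longrightarrow> i < d \<Longrightarrow> j < d \<Longrightarrow> i + 2 \<le> j \<Longrightarrow> T i * T j = T j * T i"
proof -
  have "\<forall>i j. 1 \<le> i \<and> 1 \<le> j \<and> i < d \<and> j < d \<and> (i + 2 \<le> j \<or> j + 2 \<le> i) \<longrightarrow> T i * T j = T j * T i"
    using HB unfolding is_HB_def by blast
  then show "1 \<le> i \<Longrightarrow> 1 \<le> j \<Longrightarrow> i < d \<Longrightarrow> j < d \<Longrightarrow> i + 2 \<le> j \<Longrightarrow> T i * T j = T j * T i" by blast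
qed
lemma T0sq: "T 0 * T 0 = 1" using HB unfolding is_HB_def by blast
lemma quad: "1 \<le> i \<Longrightarrow> i < d \<Longrightarrow> T i * T i = (sc q - 1) * T i + sc q"
  using HB unfolding is_HB_def by blast

lemma sc0: "sc 0 = 0"
proof -
  have "sc (0 + 0) = sc 0 + sc 0" by (rule scadd)
  then show ?thesis by simp
qed
lemma scdiff: "sc (a - b) = sc a - sc b"
proof -
  have "sc a = sc (a - b) + sc b" using scadd[of "a - b" b] by simp
  then show ?thesis by (metis add_diff_cancel)
qed
lemma scneg: "sc (- a) = - sc a"
  using scdiff[of 0 a] sc0 by simp
lemma scpow: "sc q ^ n = sc (q ^ n)"
  by (induction n) (simp_all add: sc1 scmul)
lemma cenpow: "sc q ^ n * x = x * sc q ^ n" by (simp add: scpow cen)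
lemma cenq1: "(sc q - 1) * x = x * (sc q - 1)"
  using cen[of "q - 1" x] by (simp add: scdiff sc1)

lemma C1: "k < d \<Longrightarrow> T 0 * Lk T k = Lk T k * T 0"
proof (induction k)
  case 0 then show ?case by simp
next
  case (Suc k)
  show ?case
  proof (cases "k = 0")
    case True
    with Suc br01 show ?thesis by (simp add: mult.assoc)
  next
    case False
    have a: "T 0 * T (Suc k) = T (Suc k) * T 0" using c0i[of "Suc k"] Suc False by simp
    have b: "T 0 * Lk T k = Lk T k * T 0" using Suc by simp
    show ?thesis using commI[OF commI[OF a b] a] by (simp add: mult.assoc)
  qed
qed

lemma C2: "i < d \<Longrightarrow> k + 2 \<le> i \<Longrightarrow> T i * Lk T k = Lk T k * T i"
proof (induction k)
  case 0 then show ?case using c0i[of i] by simp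
next
  case (Suc k)
  have a: "T i * T (Suc k) = T (Suc k) * T i" using far[of "Suc k" i] Suc by simp
  have b: "T i * Lk T k = Lk T k * T i" using Suc by simp
  show ?case using commI[OF commI[OF a b] a] by (simp add: mult.assoc)
qed

lemma C3: "1 \<le> i \<Longrightarrow> i < k \<Longrightarrow> k < d \<Longrightarrow> T i * Lk T k = Lk T k * T i"
proof (induction k)
  case 0 then show ?case by simp
next
  case (Suc k)
  show ?case
  proof (cases "k = i")
    case True
    obtain p where p: "i = Suc p" using Suc by (cases i) auto
    define a where "a = T i"
    define b where "b = T (Suc i)"
    define L where "L = Lk T p"
    have bL: "b * L = L * b" unfolding b_def L_def using C2[of "Suc i" p] Suc True p by simp
    have br: "a * b * a = b * a * b" unfolding a_def b_def using braid[of i] Suc True by simp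
    have "a * (b * (a * L * a) * b) = (a*b*a) * L * a * b" by (simp add: mult.assoc)
    also have "\<dots> = (b*a*b) * L * a * b" using br by simp
    also have "\<dots> = b * a * (b * L) * a * b" by (simp add: mult.assoc)
    also have "\<dots> = b*a*(L*b)*a*b" using bL by simp
    also have "\<dots> = b*a*L*(b*a*b)" by (simp add: mult.assoc)
    also have "\<dots> = b*a*L*(a*b*a)" using br by simp
    also have "\<dots> = (b*(a*L*a)*b)*a" by (simp add: mult.assoc)
    finally show ?thesis unfolding a_def b_def L_def using True p by simp
  next
    case False
    have a: "T i * T (Suc k) = T (Suc k) * T i" using far[of i "Suc k"] Suc False by simp
    have b: "T i * Lk T k = Lk T k * T i" using Suc False by simp
    show ?thesis using commI[OF commI[OF a b] a] by (simp add: mult.assoc)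
  qed
qed

lemma C4: "Suc n < d \<Longrightarrow> Lk T n * Lk T (Suc n) = Lk T (Suc n) * Lk T n"
proof (induction n)
  case 0 then show ?case using br01 by (simp add: mult.assoc)
next
  case (Suc n)
  define A where "A = Lk T n"
  define t1 where "t1 = T (Suc n)"
  define t2 where "t2 = T (Suc (Suc n))"
  define B where "B = t1 * A * t1"
  define C where "C = t2 * B * t2"
  have IH: "A * B = B * A" using Suc unfolding A_def B_def t1_def by simp
  have t1C: "t1 * C = C * t1" unfolding t1_def C_def B_def A_def t2_def
    using C3[of "Suc n" "Suc (Suc n)"] Suc by simp
  have t2A: "t2 * A = A * t2" unfolding t2_def A_def using C2[of "Suc (Suc n)" n] Suc by simp
  have t2A': "t2 * (A * X) = A * (t2 * X)" for X by (simp add: t2A mult.assoc[symmetric])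
  have AC: "A * C = C * A"
  proof -
    have "A * C = t2 * (A * B) * t2" by (simp add: C_def B_def t2A' mult.assoc)
    also have "\<dots> = t2 * (B * A) * t2" using IH by simp
    also have "\<dots> = C * A" by (simp add: C_def B_def t2A t2A' mult.assoc)
    finally show ?thesis .
  qed
  have "B * C = t1 * A * (t1 * C)" by (simp add: B_def mult.assoc)
  also have "\<dots> = t1 * (A * C) * t1" by (simp add: t1C mult.assoc)
  also have "\<dots> = t1 * (C * A) * t1" by (simp add: AC)
  also have "\<dots> = (t1 * C) * A * t1" by (simp add: mult.assoc)
  also have "\<dots> = C * B" by (simp add: t1C B_def mult.assoc)
  finally show ?case unfolding C_def B_def t1_def t2_def A_def by simp
qed


lemma C5:
  assumes "Suc p < d"
  shows "T (Suc p) * (sc q ^ p * Lk T (Suc p) + sc q ^ Suc p * Lk T p)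
       = (sc q ^ p * Lk T (Suc p) + sc q ^ Suc p * Lk T p) * T (Suc p)"
proof -
  define a where "a = T (Suc p)"
  define A where "A = Lk T p"
  define B where "B = a * A * a"
  define c where "c = sc q"
  have aa: "a * a = (c - 1) * a + c" unfolding a_def c_def using quad[of "Suc p"] assms by simp
  have cc: "c * x = x * c" for x unfolding c_def by (rule cen)
  have cpx: "c ^ n * x = x * c ^ n" for n x unfolding c_def by (rule cenpow)
  have c1x: "(c - 1) * x = x * (c - 1)" for x unfolding c_def by (rule cenq1)
  have e1: "a * B = (c - 1) * B + c * (A * a)"
  proof -
    have "a * B = (a * a) * A * a" by (simp add: B_def mult.assoc)
    also have "\<dots> = ((c - 1) * a + c) * A * a" by (simp add: aa)
    also have "\<dots> = (c - 1) * B + c * (A * a)" by (simp add: B_def distrib_right mult.assoc)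
    finally show ?thesis .
  qed
  have e2: "B * a = (c - 1) * B + c * (a * A)"
  proof -
    have "B * a = a * A * (a * a)" by (simp add: B_def mult.assoc)
    also have "\<dots> = a * A * ((c - 1) * a + c)" by (simp add: aa)
    also have "\<dots> = a * A * (c - 1) * a + a * A * c" by (simp add: distrib_left mult.assoc)
    also have "\<dots> = (c - 1) * B + c * (a * A)"
    proof -
      have x1: "a * A * (c - 1) * a = (c - 1) * B"
        by (metis B_def c1x mult.assoc)
      have x2: "a * A * c = c * (a * A)" by (simp add: cc)
      show ?thesis by (simp add: x1 x2)
    qed
    finally show ?thesis .
  qed
  have ac: "a * c ^ n = c ^ n * a" for n using cpx[of n a] by simp
  have "a * (c ^ p * B + c ^ Suc p * A) = c ^ p * (a * B) + c ^ Suc p * (a * A)"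
    by (simp only: distrib_left mult.assoc[symmetric] ac)
  also have "\<dots> = c ^ p * ((c - 1) * B) + c ^ p * c * (A * a) + c ^ Suc p * (a * A)"
    by (simp add: e1 distrib_left mult.assoc)
  also have "\<dots> = c ^ p * ((c - 1) * B) + c ^ Suc p * (A * a) + c ^ p * c * (a * A)"
    by (simp add: power_commutes add.commute)
  also have "\<dots> = c ^ p * (B * a) + c ^ Suc p * (A * a)"
    by (simp add: e2 distrib_left mult.assoc)
  also have "\<dots> = (c ^ p * B + c ^ Suc p * A) * a"
    by (simp add: distrib_right mult.assoc)
  finally show ?thesis unfolding a_def A_def B_def c_def by simp
qed

lemma C6:
  assumes "Suc p < d"
  shows "T (Suc p) * (Fk sc q T p * Fk sc q T (Suc p)) = (Fk sc q T p * Fk sc q T (Suc p)) * T (Suc p)"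
proof -
  define a where "a = T (Suc p)"
  define A where "A = Lk T p"
  define B where "B = Lk T (Suc p)"
  define c where "c = sc q"
  have cpx: "c ^ n * x = x * c ^ n" for n x unfolding c_def by (rule cenpow)
  have AB: "A * B = B * A" unfolding A_def B_def using C4 assms by simp
  have Bd: "B = a * A * a" unfolding B_def a_def A_def by simp
  have lin: "a * (c ^ p * B + c ^ Suc p * A) = (c ^ p * B + c ^ Suc p * A) * a"
    unfolding a_def A_def B_def c_def using C5 assms by simp
  have quadr: "a * (A * B) = (A * B) * a"
  proof -
    have "a * (A * B) = B * A * a" by (simp add: Bd mult.assoc)
    also have "\<dots> = A * B * a" by (simp add: AB)
    finally show ?thesis .
  qed
  have ac: "a * c ^ n = c ^ n * a" for n using cpx[of n a] by simp
  have sc: "a * (c ^ p * c ^ Suc p) = (c ^ p * c ^ Suc p) * a"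
    by (simp only: power_add[symmetric] ac)
  have F: "Fk sc q T p * Fk sc q T (Suc p) = c ^ p * c ^ Suc p + (c ^ p * B + c ^ Suc p * A) + A * B"
  proof -
    have Lc: "A * c ^ n = c ^ n * A" for n using cpx[of n A] by simp
    show ?thesis unfolding Fk_def A_def[symmetric] B_def[symmetric] c_def[symmetric]
      by (simp only: distrib_left distrib_right Lc add.assoc add.left_commute)
  qed
  show ?thesis unfolding F a_def[symmetric]
    using sc lin quadr by (simp add: distrib_left distrib_right)
qed

lemma T0F: "k < d \<Longrightarrow> T 0 * Fk sc q T k = Fk sc q T k * T 0"
  using C1[of k] by (simp add: Fk_def distrib_left distrib_right cenpow)

lemma comm_u0: "j \<le> d \<Longrightarrow> T 0 * uplus sc q T j = uplus sc q T j * T 0"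
proof (induction j)
  case (Suc j)
  then show ?case using commI[of "T 0" "uplus sc q T j" "Fk sc q T j"] T0F[of j] by simp
qed simp

lemma comm_ulow: "i < d \<Longrightarrow> j < i \<Longrightarrow> T i * uplus sc q T j = uplus sc q T j * T i"
proof (induction j)
  case (Suc j)
  have "T i * Fk sc q T j = Fk sc q T j * T i"
    using C2[of i j] Suc by (simp add: Fk_def distrib_left distrib_right cenpow)
  then show ?case using commI[of "T i" "uplus sc q T j" "Fk sc q T j"] Suc by simp
qed simp

lemma comm_uhigh: "1 \<le> i \<Longrightarrow> i < j \<Longrightarrow> j \<le> d \<Longrightarrow> T i * uplus sc q T j = uplus sc q T j * T i"
proof (induction j)
  case 0 then show ?case by simp
next
  case (Suc j)
  show ?case
  proof (cases "j = i")
    case True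
    obtain p where p: "i = Suc p" using Suc by (cases i) auto
    have u: "uplus sc q T (Suc j) = uplus sc q T p * (Fk sc q T p * Fk sc q T (Suc p))"
      using True p by (simp add: mult.assoc)
    have h1: "T i * uplus sc q T p = uplus sc q T p * T i" using comm_ulow[of i p] Suc p by simp
    have h2: "T i * (Fk sc q T p * Fk sc q T (Suc p)) = (Fk sc q T p * Fk sc q T (Suc p)) * T i"
      using C6[of p] Suc True p by simp
    show ?thesis unfolding u using commI[OF h1 h2] .
  next
    case False
    have "T i * Fk sc q T j = Fk sc q T j * T i"
      using C3[of i j] Suc False by (simp add: Fk_def distrib_left distrib_right cenpow)
    then show ?thesis using commI[of "T i" "uplus sc q T j" "Fk sc q T j"] Suc False by simp
  qed
qed

lemma comm_u: "j \<le> d \<Longrightarrow> i < d \<Longrightarrow> i \<noteq> j \<Longrightarrow> uplus sc q T j * T i = T i * uplus sc q T j"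
proof -
  assume a: "j \<le> d" "i < d" "i \<noteq> j"
  show ?thesis
  proof (cases "i = 0")
    case True then show ?thesis using comm_u0 a by simp
  next
    case False
    then show ?thesis using comm_ulow[of i j] comm_uhigh[of i j] a by (cases "j < i") auto
  qed
qed


lemma H_sc: "sc a \<in> Hset sc T d" by (rule Hset.scal)
lemma H_1: "1 \<in> Hset sc T d" using H_sc[of 1] sc1 by simp
lemma H_T: "1 \<le> i \<Longrightarrow> i < d \<Longrightarrow> T i \<in> Hset sc T d" by (rule Hset.gen)
lemma H_mult: "x \<in> Hset sc T d \<Longrightarrow> y \<in> Hset sc T d \<Longrightarrow> x * y \<in> Hset sc T d" by (rule Hset.mult)
lemma H_add: "x \<in> Hset sc T d \<Longrightarrow> y \<in> Hset sc T d \<Longrightarrow> x + y \<in> Hset sc T d" by (rule Hset.add)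
lemma H_neg: "x \<in> Hset sc T d \<Longrightarrow> - x \<in> Hset sc T d"
proof -
  assume x: "x \<in> Hset sc T d"
  have "- x = sc (- 1) * x" by (simp add: scneg sc1)
  then show ?thesis using H_mult[OF H_sc x] by simp
qed

lemma T_inv: "1 \<le> k \<Longrightarrow> k < d \<Longrightarrow> \<exists>y\<in>Hset sc T d. T k * y = 1 \<and> y * T k = 1"
proof -
  assume k: "1 \<le> k" "k < d"
  obtain q' where q': "1 = q * q'" using qunit by (auto simp: dvd_def)
  define c where "c = sc q"
  define Z where "Z = T k - (c - 1)"
  have Z1: "T k * Z = c"
    unfolding Z_def using quad[OF k] cenq1[of "T k"] by (simp add: c_def right_diff_distrib)
  have Z2: "Z * T k = c"
    unfolding Z_def using quad[OF k] by (simp add: c_def left_diff_distrib)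
  have qq: "sc q' * c = 1" unfolding c_def using q' sc1 scmul[of q' q] by (simp add: mult.commute)
  have "T k * (sc q' * Z) = 1" using Z1 qq by (metis cen mult.assoc)
  moreover have "(sc q' * Z) * T k = 1" using Z2 qq by (simp add: mult.assoc)
  moreover have "sc q' * Z \<in> Hset sc T d"
  proof -
    have "Z = T k + sc (1 - q)" unfolding Z_def c_def by (simp add: scdiff sc1)
    then show ?thesis using H_mult[OF H_sc H_add[OF H_T[OF k] H_sc]] by simp
  qed
  ultimately show ?thesis by blast
qed

lemma inv_mult: "\<exists>y\<in>Hset sc T d. x * y = 1 \<and> y * x = 1 \<Longrightarrow> \<exists>y\<in>Hset sc T d. x' * y = 1 \<and> y * x' = 1
  \<Longrightarrow> \<exists>y\<in>Hset sc T d. (x * x') * y = 1 \<and> y * (x * x') = 1"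
proof -
  assume "\<exists>y\<in>Hset sc T d. x * y = 1 \<and> y * x = 1" "\<exists>y\<in>Hset sc T d. x' * y = 1 \<and> y * x' = 1"
  then obtain y y' where y: "y \<in> Hset sc T d" "x * y = 1" "y * x = 1"
    and y': "y' \<in> Hset sc T d" "x' * y' = 1" "y' * x' = 1" by blast
  have "(x * x') * (y' * y) = 1" by (metis y(2) y'(2) mult.assoc mult_1_left)
  moreover have "(y' * y) * (x * x') = 1" by (metis y(3) y'(3) mult.assoc mult_1_left)
  ultimately show ?thesis using H_mult[OF y'(1) y(1)] by blast
qed

lemma Up_inv: "i < d \<Longrightarrow> \<exists>y\<in>Hset sc T d. Up T i * y = 1 \<and> y * Up T i = 1"
proof (induction i)
  case 0 then show ?case using H_1 by auto
next
  case (Suc i)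
  then show ?case using inv_mult[of "Up T i" "T (Suc i)"] T_inv[of "Suc i"] by simp
qed

lemma Up_rinv: "i < d \<Longrightarrow> rinv (Up T i) \<in> Hset sc T d \<and> Up T i * rinv (Up T i) = 1"
  using Up_inv[of i] rinv_eq by metis

lemma partb: "1 \<le> i \<Longrightarrow> i < d \<Longrightarrow>
  uplus sc q T i * Tarr T i 0 = uplus sc q T (Suc i) * rinv (Tarr T 1 i) - sc q ^ i * uplus sc q T i * rinv (Tarr T 1 i)"
proof -
  assume i: "1 \<le> i" "i < d"
  define R where "R = rinv (Up T i)"
  define u where "u = uplus sc q T i"
  have UR: "Up T i * R = 1" using Up_rinv[OF i(2)] R_def by simp
  have uc: "u * sc q ^ i = sc q ^ i * u" using cenpow[of i u] by simp
  have "uplus sc q T (Suc i) * R - sc q ^ i * u * R = u * (sc q ^ i + Lk T i) * R - sc q ^ i * u * R"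
    by (simp add: u_def Fk_def)
  also have "\<dots> = u * Lk T i * R" by (simp add: distrib_left distrib_right uc)
  also have "\<dots> = u * Dn T i * T 0 * (Up T i * R)" by (simp add: Lk_def mult.assoc)
  also have "\<dots> = u * Tarr T i 0" by (simp add: UR Tarr_i0 mult.assoc)
  moreover have "Tarr T 1 i = Up T i" using Tarr_up1 i(1) by blast
  ultimately show ?thesis by (simp add: R_def u_def)
qed

end

lemma (in hb) H'_sub: "x \<in> Hset sc (\<lambda>n. T (Suc n)) (d - 1) \<Longrightarrow> x \<in> Hset sc T d"
proof (induction rule: Hset.induct)
  case (scal a) then show ?case by (rule H_sc)
next
  case (gen i) then show ?case using H_T[of "Suc i"] by simp
next
  case (add x y) then show ?case by (blast intro: H_add)
next
  case (mult x y) then show ?case by (blast intro: H_mult)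
qed

lemma (in hb) H'_T0: "x \<in> Hset sc (\<lambda>n. T (Suc n)) (d - 1) \<Longrightarrow> T 0 * x = x * T 0"
proof (induction rule: Hset.induct)
  case (scal a) then show ?case using cen[of a "T 0"] by simp
next
  case (gen i) then show ?case using c0i[of "Suc i"] by simp
next
  case (add x y) then show ?case by (simp add: distrib_left distrib_right)
next
  case (mult x y) then show ?case using commI by blast
qed

lemma (in hb) H'_T: "2 \<le> j \<Longrightarrow> j < d \<Longrightarrow> T j \<in> Hset sc (\<lambda>n. T (Suc n)) (d - 1)"
  using Hset.gen[where i="j - 1" and d="d - 1" and sc=sc and T="\<lambda>n. T (Suc n)"] by simp


context hb begin

lemma Dn_far: "k + 2 \<le> j \<Longrightarrow> j < d \<Longrightarrow> T j * Dn T k = Dn T k * T j"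
proof (induction k)
  case (Suc k)
  have "T j * T (Suc k) = T (Suc k) * T j" using far[of "Suc k" j] Suc by simp
  then show ?case using Suc commI[of "T j" "T (Suc k)" "Dn T k"] by simp
qed simp

lemma Dn_braid: "1 \<le> j \<Longrightarrow> j < k \<Longrightarrow> k < d \<Longrightarrow> T j * Dn T k = Dn T k * T (Suc j)"
proof (induction k)
  case 0 then show ?case by simp
next
  case (Suc k)
  show ?case
  proof (cases "k = j")
    case True
    obtain p where p: "j = Suc p" using Suc by (cases j) auto
    have br: "T j * T (Suc j) * T j = T (Suc j) * T j * T (Suc j)" using braid[of j] Suc True by simp
    have fa: "T (Suc j) * Dn T p = Dn T p * T (Suc j)" using Dn_far[of p "Suc j"] Suc True p by simp
    have "T j * Dn T (Suc k) = (T j * T (Suc j) * T j) * Dn T p" using True p by (simp add: mult.assoc)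
    also have "\<dots> = T (Suc j) * T j * (T (Suc j) * Dn T p)" using br by (simp add: mult.assoc)
    also have "\<dots> = Dn T (Suc k) * T (Suc j)" using fa True p by (simp add: mult.assoc)
    finally show ?thesis .
  next
    case False
    have "T j * T (Suc k) = T (Suc k) * T j" using far[of j "Suc k"] Suc False by simp
    moreover have "T j * Dn T k = Dn T k * T (Suc j)" using Suc False by simp
    ultimately show ?thesis by (metis Dn_Suc mult.assoc)
  qed
qed

lemma Dn_quad: "1 \<le> k \<Longrightarrow> k < d \<Longrightarrow> T k * Dn T k = Dn T k * sc (q - 1) + Dn T (k - 1) * sc q"
proof -
  assume k: "1 \<le> k" "k < d"
  obtain p where p: "k = Suc p" using k by (cases k) auto
  have "T k * Dn T k = (T k * T k) * Dn T p" using p by (simp add: mult.assoc)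
  also have "\<dots> = sc (q - 1) * Dn T k + sc q * Dn T p"
    using quad[OF k] p by (simp add: scdiff sc1 distrib_right mult.assoc)
  also have "\<dots> = Dn T k * sc (q - 1) + Dn T (k - 1) * sc q" using p by (simp add: cen)
  finally show ?thesis .
qed

lemma Dn_H: "k < d \<Longrightarrow> Dn T k \<in> Hset sc T d"
  by (induction k) (simp_all add: H_1 H_mult H_T)

lemma V_T: "v \<in> Vset sc T d \<Longrightarrow> 1 \<le> j \<Longrightarrow> j < d \<Longrightarrow> T j * v \<in> Vset sc T d"
proof (induction rule: Vset.induct)
  case zero then show ?case by (simp add: Vset.zero)
next
  case (add x y) then show ?case by (simp add: distrib_left Vset.add)
next
  case (base k x)
  let ?H' = "Hset sc (\<lambda>n. T (Suc n)) (d - 1)"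
  have Hm: "a \<in> ?H' \<Longrightarrow> b \<in> ?H' \<Longrightarrow> a * b \<in> ?H'" for a b by (rule Hset.mult)
  consider "j = Suc k" | "Suc k < j" | "j = k" | "j < k" by linarith
  then show ?case
  proof cases
    case 1
    then show ?thesis using Vset.base[where k="Suc k" and d=d and x=x and sc=sc and T=T] base by (simp add: mult.assoc)
  next
    case 2
    have "T j * Dn T k = Dn T k * T j" using Dn_far[of k j] 2 base by simp
    then have "T j * (Dn T k * x) = Dn T k * (T j * x)" by (metis mult.assoc)
    moreover have "T j * x \<in> ?H'" using Hm[OF H'_T[of j] base(2)] 2 base by simp
    ultimately show ?thesis using Vset.base[where k=k and d=d and x="T j * x" and sc=sc and T=T] base by simp
  next
    case 3
    have "T j * (Dn T k * x) = Dn T k * (sc (q - 1) * x) + Dn T (k - 1) * (sc q * x)"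
      using Dn_quad[of k] 3 base by (simp add: mult.assoc[symmetric] distrib_right)
    moreover have "Dn T k * (sc (q - 1) * x) \<in> Vset sc T d"
      using Vset.base[where k=k and d=d and x="sc (q - 1) * x" and sc=sc and T=T] base Hm[OF Hset.scal base(2)] by simp
    moreover have "Dn T (k - 1) * (sc q * x) \<in> Vset sc T d"
      using Vset.base[where k="k - 1" and d=d and x="sc q * x" and sc=sc and T=T] base Hm[OF Hset.scal base(2)] by simp
    ultimately show ?thesis by (simp add: Vset.add)
  next
    case 4
    have "T j * Dn T k = Dn T k * T (Suc j)" using Dn_braid[of j k] 4 base by simp
    then have "T j * (Dn T k * x) = Dn T k * (T (Suc j) * x)" by (metis mult.assoc)
    moreover have "T (Suc j) * x \<in> ?H'" using Hm[OF H'_T[of "Suc j"] base(2)] 4 base by simp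
    ultimately show ?thesis using Vset.base[where k=k and d=d and x="T (Suc j) * x" and sc=sc and T=T] base by simp
  qed
qed

lemma V_word: "set w \<subseteq> {1..<d} \<Longrightarrow> 0 < d \<Longrightarrow> prod_list (map T w) \<in> Vset sc T d"
proof (induction w)
  case Nil
  have "Dn T 0 * sc 1 \<in> Vset sc T d" using Nil by (intro Vset.base Hset.scal) simp
  then show ?case by (simp add: sc1)
next
  case (Cons a w) then show ?case using V_T by simp
qed

definition inM :: "nat \<Rightarrow> 'a \<Rightarrow> bool" where
  "inM i x \<longleftrightarrow> (\<exists>h\<in>Hset sc T d. \<exists>f. (\<forall>j\<in>{i<..d}. f j \<in> twosided (Hset sc T d) (uplus sc q T j))
     \<and> x = uplus sc q T i * h + (\<Sum>j\<in>{i<..d}. f j))"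

lemma inM_zero: "inM i 0"
  unfolding inM_def using H_sc[of 0] sc0 by (intro bexI[of _ 0] exI[of _ "\<lambda>_. 0"]) (auto intro: twosided.zero)

lemma inM_add: "inM i x \<Longrightarrow> inM i y \<Longrightarrow> inM i (x + y)"
proof -
  assume "inM i x" "inM i y"
  then obtain h f h' f' where a: "h \<in> Hset sc T d" "\<forall>j\<in>{i<..d}. f j \<in> twosided (Hset sc T d) (uplus sc q T j)"
    "x = uplus sc q T i * h + (\<Sum>j\<in>{i<..d}. f j)"
    and b: "h' \<in> Hset sc T d" "\<forall>j\<in>{i<..d}. f' j \<in> twosided (Hset sc T d) (uplus sc q T j)"
    "y = uplus sc q T i * h' + (\<Sum>j\<in>{i<..d}. f' j)"
    unfolding inM_def by blast
  have "x + y = uplus sc q T i * (h + h') + (\<Sum>j\<in>{i<..d}. f j + f' j)"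
    using a(3) b(3) by (simp add: sum.distrib distrib_left algebra_simps)
  moreover have "\<forall>j\<in>{i<..d}. f j + f' j \<in> twosided (Hset sc T d) (uplus sc q T j)"
    using a(2) b(2) by (simp add: twosided.add)
  ultimately show ?thesis unfolding inM_def using H_add[OF a(1) b(1)]
    by (intro bexI[of _ "h + h'"] exI[of _ "\<lambda>j. f j + f' j"] conjI) auto
qed

lemma inM_rmul: "inM i x \<Longrightarrow> g \<in> Hset sc T d \<Longrightarrow> inM i (x * g)"
proof -
  assume "inM i x" and g: "g \<in> Hset sc T d"
  then obtain h f where a: "h \<in> Hset sc T d" "\<forall>j\<in>{i<..d}. f j \<in> twosided (Hset sc T d) (uplus sc q T j)"
    "x = uplus sc q T i * h + (\<Sum>j\<in>{i<..d}. f j)"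
    unfolding inM_def by blast
  have "x * g = uplus sc q T i * (h * g) + (\<Sum>j\<in>{i<..d}. f j * g)"
    using a(3) by (simp add: sum_distrib_right distrib_right mult.assoc)
  moreover have "\<forall>j\<in>{i<..d}. f j * g \<in> twosided (Hset sc T d) (uplus sc q T j)"
    using a(2) g twosided_rmul[where H="Hset sc T d"] H_mult by blast
  ultimately show ?thesis unfolding inM_def using H_mult[OF a(1) g]
    by (intro bexI[of _ "h * g"] exI[of _ "\<lambda>j. f j * g"] conjI) auto
qed

lemma uplus_Fk: "uplus sc q T i = prod_list (map (Fk sc q T) [0..<i])"
  unfolding uplus_def Fk_def Tarr2_0 by simp

lemma u_T0: "1 \<le> i \<Longrightarrow> i \<le> d \<Longrightarrow> uplus sc q T i * T 0 = uplus sc q T i"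
proof -
  assume i: "1 \<le> i" "i \<le> d"
  define R where "R = prod_list (map (Fk sc q T) [1..<i])"
  have u: "uplus sc q T i = (1 + T 0) * R"
    using i by (simp add: uplus_Fk R_def upt_conv_Cons Fk_def del: upt_Suc)
  have "uplus sc q T i * T 0 = T 0 * uplus sc q T i" using comm_u0[OF i(2)] by simp
  also have "\<dots> = (T 0 + T 0 * T 0) * R" by (simp add: u distrib_left mult.assoc[symmetric])
  also have "\<dots> = uplus sc q T i" by (simp add: u T0sq add.commute)
  finally show ?thesis .
qed

lemma u_Dn_comm: "k < i \<Longrightarrow> i \<le> d \<Longrightarrow> uplus sc q T i * Dn T k = Dn T k * uplus sc q T i"
proof (induction k)
  case (Suc k)
  have "uplus sc q T i * T (Suc k) = T (Suc k) * uplus sc q T i" using comm_u[of i "Suc k"] Suc by simp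
  then show ?case using Suc commI[of "uplus sc q T i" "T (Suc k)" "Dn T k"] by simp
qed simp

lemma P_exists: "i \<le> k \<Longrightarrow> k < d \<Longrightarrow>
  \<exists>P\<in>Hset sc T d. P * uplus sc q T i = uplus sc q T i * P \<and> Dn T k = P * Dn T i"
proof (induction k)
  case 0 then show ?case using H_1 by (intro bexI[of _ 1]) auto
next
  case (Suc k)
  show ?case
  proof (cases "i = Suc k")
    case True then show ?thesis using H_1 by (intro bexI[of _ 1]) auto
  next
    case False
    then obtain P where P: "P \<in> Hset sc T d" "P * uplus sc q T i = uplus sc q T i * P" "Dn T k = P * Dn T i"
      using Suc by auto
    have c: "T (Suc k) * uplus sc q T i = uplus sc q T i * T (Suc k)" using comm_u[of i "Suc k"] Suc False by simp
    have "T (Suc k) * P \<in> Hset sc T d" using H_mult[OF H_T[of "Suc k"] P(1)] Suc by simp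
    moreover have "(T (Suc k) * P) * uplus sc q T i = uplus sc q T i * (T (Suc k) * P)"
      using c P(2) by (metis mult.assoc)
    moreover have "Dn T (Suc k) = (T (Suc k) * P) * Dn T i" using P(3) by (simp add: mult.assoc)
    ultimately show ?thesis by blast
  qed
qed

lemma key: "1 \<le> i \<Longrightarrow> i < d \<Longrightarrow> P \<in> Hset sc T d \<Longrightarrow> P * uplus sc q T i = uplus sc q T i * P \<Longrightarrow>
  \<exists>f. (\<forall>j\<in>{i<..d}. f j \<in> twosided (Hset sc T d) (uplus sc q T j)) \<and>
     P * (uplus sc q T i * Tarr T i 0) = uplus sc q T i * (P * (- (sc q ^ i) * rinv (Tarr T 1 i))) + (\<Sum>j\<in>{i<..d}. f j)"
proof -
  assume i: "1 \<le> i" "i < d" and P: "P \<in> Hset sc T d" "P * uplus sc q T i = uplus sc q T i * P"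
  define R where "R = rinv (Tarr T 1 i)"
  define u where "u = uplus sc q T i"
  define c where "c = sc q ^ i"
  define f where "f j = (if j = Suc i then P * uplus sc q T (Suc i) * R else 0)" for j
  have TU: "Tarr T 1 i = Up T i" using Tarr_up1 i(1) by blast
  have RH: "R \<in> Hset sc T d" using Up_rinv[OF i(2)] TU R_def by simp
  have ftw: "\<forall>j\<in>{i<..d}. f j \<in> twosided (Hset sc T d) (uplus sc q T j)"
    by (auto simp: f_def intro: twosided.zero twosided.prod[OF P(1) RH])
  have fs: "(\<Sum>j\<in>{i<..d}. f j) = P * uplus sc q T (Suc i) * R"
    using i by (simp add: f_def sum.delta')
  have cu: "c * x = x * c" for x unfolding c_def by (rule cenpow)
  define X where "X = P * uplus sc q T (Suc i) * R"
  have Pc: "P * c = c * P" using cu[of P] by simp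
  have "P * (u * Tarr T i 0) = P * (uplus sc q T (Suc i) * R - c * u * R)"
    using partb[OF i] by (simp add: u_def c_def R_def)
  also have "\<dots> = X - (P * c) * u * R"
    by (simp add: X_def right_diff_distrib mult.assoc)
  also have "\<dots> = X - c * (P * u) * R" by (simp only: Pc mult.assoc)
  also have "\<dots> = X - (u * P) * c * R" using P(2) cu[of "u * P"] by (simp add: u_def)
  also have "\<dots> = u * (P * (- c * R)) + X" by (simp add: mult.assoc)
  finally show ?thesis using ftw fs unfolding X_def u_def c_def R_def by auto
qed

lemma inM_base: "1 \<le> i \<Longrightarrow> i \<le> d \<Longrightarrow> k < d \<Longrightarrow> inM i (uplus sc q T i * Dn T k * T 0)"
proof -
  assume i: "1 \<le> i" "i \<le> d" and k: "k < d"
  show ?thesis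
  proof (cases "k < i")
    case True
    have "uplus sc q T i * Dn T k * T 0 = Dn T k * (uplus sc q T i * T 0)"
      using u_Dn_comm[OF True i(2)] by (simp add: mult.assoc)
    also have "\<dots> = uplus sc q T i * Dn T k + 0" using u_T0[OF i] u_Dn_comm[OF True i(2)] by simp
    finally have e: "uplus sc q T i * Dn T k * T 0 = uplus sc q T i * Dn T k + (\<Sum>j\<in>{i<..d}. (\<lambda>_. 0) j)"
      by simp
    show ?thesis unfolding inM_def using Dn_H[OF k] twosided.zero
      by (intro bexI[of _ "Dn T k"] exI[of _ "\<lambda>_. 0"] conjI ballI e) simp_all
  next
    case False
    then have ik: "i \<le> k" "i < d" using k by auto
    obtain P where P: "P \<in> Hset sc T d" "P * uplus sc q T i = uplus sc q T i * P" "Dn T k = P * Dn T i"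
      using P_exists[OF ik(1) k] by blast
    obtain f where f: "\<forall>j\<in>{i<..d}. f j \<in> twosided (Hset sc T d) (uplus sc q T j)"
      "P * (uplus sc q T i * Tarr T i 0) = uplus sc q T i * (P * (- (sc q ^ i) * rinv (Tarr T 1 i))) + (\<Sum>j\<in>{i<..d}. f j)"
      using key[OF i(1) ik(2) P(1) P(2)] by blast
    have "uplus sc q T i * Dn T k * T 0 = P * (uplus sc q T i * Tarr T i 0)"
      using P(2,3) by (simp add: Tarr_i0 mult.assoc[symmetric])
    moreover have "P * (- (sc q ^ i) * rinv (Tarr T 1 i)) \<in> Hset sc T d"
    proof -
      have "- (sc q ^ i) = sc (- (q ^ i))" by (simp add: scpow scneg)
      moreover have "Tarr T 1 i = Up T i" using Tarr_up1 i(1) by blast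
      then have "rinv (Tarr T 1 i) \<in> Hset sc T d" using Up_rinv[OF ik(2)] by simp
      ultimately show ?thesis using H_mult[OF P(1) H_mult[OF H_sc]] by simp
    qed
    ultimately show ?thesis unfolding inM_def using f
      by (intro bexI[of _ "P * (- (sc q ^ i) * rinv (Tarr T 1 i))"] exI[of _ f] conjI) simp_all
  qed
qed

lemma V_inM: "v \<in> Vset sc T d \<Longrightarrow> 1 \<le> i \<Longrightarrow> i \<le> d \<Longrightarrow> inM i (uplus sc q T i * v * T 0)"
proof (induction rule: Vset.induct)
  case zero then show ?case using inM_zero by simp
next
  case (add x y) then show ?case using inM_add by (simp add: distrib_left distrib_right)
next
  case (base k x)
  have "uplus sc q T i * (Dn T k * x) * T 0 = (uplus sc q T i * Dn T k * T 0) * x"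
    using H'_T0[OF base(2)] by (simp add: mult.assoc)
  then show ?case using inM_rmul[OF inM_base[OF base(3) base(4) base(1)] H'_sub[OF base(2)]] by simp
qed

end
theorem lemma6p2:
  fixes sc :: "'k::comm_ring_1 \<Rightarrow> 'a::ring_1" and q :: 'k and T :: "nat \<Rightarrow> 'a"
    and m d :: nat
  assumes m: "1 \<le> m" and d: "d = 2 * m"
    and HB: "is_HB sc q d T"
  defines "u \<equiv> uplus sc q T"
    and "H \<equiv> Hset sc T d"
  shows
    "(\<forall>j \<le> d. \<forall>i < d. i \<noteq> j \<longrightarrow> u j * T i = T i * u j)
   \<and> (\<forall>i. 1 \<le> i \<and> i < d \<longrightarrow>
        u i * Tarr T i 0 = u (i+1) * rinv (Tarr T 1 i) - sc q ^ i * u i * rinv (Tarr T 1 i))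
   \<and> (\<forall>i w. 1 \<le> i \<and> i \<le> d \<and> reduced_word d w \<longrightarrow>
        (\<exists>h \<in> H. \<exists>f. (\<forall>j \<in> {i<..d}. f j \<in> twosided H (u j)) \<and>
           u i * Tword T w * T 0 = u i * h + (\<Sum>j \<in> {i<..d}. f j)))
   \<and> (\<forall>i. 1 \<le> i \<and> i < d \<longrightarrow>
        (\<exists>f. (\<forall>j \<in> {i<..d}. f j \<in> twosided H (u j)) \<and>
           u i * Tarr T i 0 = u i * (- (sc q ^ i) * rinv (Tarr T 1 i)) + (\<Sum>j \<in> {i<..d}. f j)))"
proof -
  interpret hb sc q d T by (rule hb.intro[OF HB])
  have d0: "0 < d" using m d by simp
  have A: "\<forall>j \<le> d. \<forall>i < d. i \<noteq> j \<longrightarrow> uplus sc q T j * T i = T i * uplus sc q T j"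
    using comm_u by blast
  have B: "\<forall>i. 1 \<le> i \<and> i < d \<longrightarrow>
        uplus sc q T i * Tarr T i 0 = uplus sc q T (i+1) * rinv (Tarr T 1 i) - sc q ^ i * uplus sc q T i * rinv (Tarr T 1 i)"
    using partb by simp
  have C: "\<forall>i w. 1 \<le> i \<and> i \<le> d \<and> reduced_word d w \<longrightarrow>
        (\<exists>h \<in> Hset sc T d. \<exists>f. (\<forall>j \<in> {i<..d}. f j \<in> twosided (Hset sc T d) (uplus sc q T j)) \<and>
           uplus sc q T i * Tword T w * T 0 = uplus sc q T i * h + (\<Sum>j \<in> {i<..d}. f j))"
  proof (intro allI impI)
    fix i w assume a: "1 \<le> i \<and> i \<le> d \<and> reduced_word d w"
    then have "set w \<subseteq> {1..<d}" by (simp add: reduced_word_def)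
    then have "prod_list (map T w) \<in> Vset sc T d" using V_word d0 by simp
    then have "inM i (uplus sc q T i * prod_list (map T w) * T 0)" using V_inM a by simp
    then show "\<exists>h \<in> Hset sc T d. \<exists>f. (\<forall>j \<in> {i<..d}. f j \<in> twosided (Hset sc T d) (uplus sc q T j)) \<and>
           uplus sc q T i * Tword T w * T 0 = uplus sc q T i * h + (\<Sum>j \<in> {i<..d}. f j)"
      unfolding inM_def Tword_def .
  qed
  have D: "\<forall>i. 1 \<le> i \<and> i < d \<longrightarrow>
        (\<exists>f. (\<forall>j \<in> {i<..d}. f j \<in> twosided (Hset sc T d) (uplus sc q T j)) \<and>
           uplus sc q T i * Tarr T i 0 = uplus sc q T i * (- (sc q ^ i) * rinv (Tarr T 1 i)) + (\<Sum>j \<in> {i<..d}. f j))"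
  proof (intro allI impI)
    fix i assume a: "1 \<le> i \<and> i < d"
    show "\<exists>f. (\<forall>j \<in> {i<..d}. f j \<in> twosided (Hset sc T d) (uplus sc q T j)) \<and>
           uplus sc q T i * Tarr T i 0 = uplus sc q T i * (- (sc q ^ i) * rinv (Tarr T 1 i)) + (\<Sum>j \<in> {i<..d}. f j)"
      using key[of i 1] a H_1 by simp
  qed
  show ?thesis unfolding u_def H_def using A B C D by blast
qed

end
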